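(* Let $\sigma(x)=1/(1+e^{-x})$, let $a,\beta_n,B_n,\gamma_n^*\ge1$, $K_n,L,r,n\in\mathbb{N}$, and let $f_{\mathbf{w}}$ be the network described in the context. Let $(X_1,Y_1),\dots,(X_n,Y_n)\in\mathbb{R}^d\times\mathbb{R}$ with $X_i\in[-a,a]^d$ and $|Y_i|\le\beta_n$ for $i=1,\dots,n$, and let $F_n(\mathbf{w})=\frac1n\sum_{i=1}^n|Y_i-f_{\mathbf{w}}(X_i)|^2$. Assume $K_n\gamma_n^*\ge\beta_n$, and let $\mathbf{w}$ satisfy $|w^{(L)}_{1,1,k}|\le\gamma_n^*$ for all $k$ and $|w^{(l)}_{k,i,j}|\le B_n$ for all $k,i,j$ and $l\in\{1,\dots,L-1\}$. Then there is a constant $c_{14}=c_{14}(d,L,r,a)>0$ such that $$\|\nabla_{\mathbf{w}}F_n(\mathbf{w})\|\le c_{14}\,K_n^{3/2}(\gamma_n^* )^2B_n^L.$$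
   Context: For a weight vector $\mathbf{w}$, $f_{\mathbf{w}}(x)=\sum_{j=1}^{K_n}w^{(L)}_{1,1,j}f^{(L)}_{j,1}(x)$, where for $k\in\{1,\dots,K_n\}$, $i\in\{1,\dots,r\}$: $f^{(l)}_{k,i}(x)=\sigma\big(\sum_{j=1}^rw^{(l-1)}_{k,i,j}f^{(l-1)}_{k,j}(x)+w^{(l-1)}_{k,i,0}\big)$ for $l=2,\dots,L$ and $f^{(1)}_{k,i}(x)=\sigma\big(\sum_{j=1}^dw^{(0)}_{k,i,j}x^{(j)}+w^{(0)}_{k,i,0}\big)$. The gradient is with respect to all weights; $\|\cdot\|$ is the Euclidean norm. *)

theory Defs
  imports "HOL-Analysis.Analysis"
begin

type_synonym weights = "nat \<times> nat \<times> nat \<times> nat \<Rightarrow> real"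
  \<comment> \<open>w (l,k,i,j) stands for w^{(l)}_{k,i,j}\<close>

definition sigmoid :: "real \<Rightarrow> real" where
  "sigmoid x = 1 / (1 + exp (- x))"

text \<open>hidden d r w x l k i = f^{(l)}_{k,i}(x) for l \<ge> 1; inputs x are indexed by 1..d.\<close>
fun hidden :: "nat \<Rightarrow> nat \<Rightarrow> weights \<Rightarrow> (nat \<Rightarrow> real) \<Rightarrow> nat \<Rightarrow> nat \<Rightarrow> nat \<Rightarrow> real" where
  "hidden d r w x 0 k i = 0"
| "hidden d r w x (Suc 0) k i =
     sigmoid ((\<Sum>j=1..d. w (0,k,i,j) * x j) + w (0,k,i,0))"
| "hidden d r w x (Suc (Suc l)) k i =
     sigmoid ((\<Sum>j=1..r. w (Suc l,k,i,j) * hidden d r w x (Suc l) k j) + w (Suc l,k,i,0))"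

definition net :: "nat \<Rightarrow> nat \<Rightarrow> nat \<Rightarrow> nat \<Rightarrow> weights \<Rightarrow> (nat \<Rightarrow> real) \<Rightarrow> real" where
  "net d L r K w x = (\<Sum>j=1..K. w (L,1,1,j) * hidden d r w x L j 1)"

definition weight_index :: "nat \<Rightarrow> nat \<Rightarrow> nat \<Rightarrow> nat \<Rightarrow> (nat \<times> nat \<times> nat \<times> nat) set" where
  "weight_index d L r K =
     {(l,k,i,j). l = 0 \<and> k \<in> {1..K} \<and> i \<in> {1..r} \<and> j \<in> {0..d}}
   \<union> {(l,k,i,j). l \<in> {1..L-1} \<and> k \<in> {1..K} \<and> i \<in> {1..r} \<and> j \<in> {0..r}}
   \<union> {(l,k,i,j). l = L \<and> k = 1 \<and> i = 1 \<and> j \<in> {1..K}}"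

definition emp_risk :: "nat \<Rightarrow> nat \<Rightarrow> nat \<Rightarrow> nat \<Rightarrow> nat \<Rightarrow> (nat \<Rightarrow> nat \<Rightarrow> real) \<Rightarrow> (nat \<Rightarrow> real) \<Rightarrow> weights \<Rightarrow> real" where
  "emp_risk d L r K n X Y w = (1 / real n) * (\<Sum>i=1..n. (Y i - net d L r K w (X i))\<^sup>2)"

definition grad_norm :: "(weights \<Rightarrow> real) \<Rightarrow> (nat \<times> nat \<times> nat \<times> nat) set \<Rightarrow> weights \<Rightarrow> real" where
  "grad_norm F I w = sqrt (\<Sum>p\<in>I. (deriv (\<lambda>t. F (w(p := t))) (w p))\<^sup>2)"

end

theory Submission
  imports Defs
begin

lemma one_exp_pos: "0 < 1 + exp (- (x::real))"
  by (simp add: add_pos_pos)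

lemma sig_pos: "0 < sigmoid x"
  unfolding sigmoid_def using one_exp_pos[of x] by simp

lemma sig_le1: "sigmoid x \<le> 1"
  unfolding sigmoid_def using one_exp_pos[of x] by simp

lemma sig_deriv: "(sigmoid has_real_derivative (exp (-x) / (1 + exp (-x))^2)) (at x)"
  unfolding sigmoid_def[abs_def]
  by (auto intro!: derivative_eq_intros simp: power2_eq_square field_simps one_exp_pos[of x, THEN less_imp_neq, symmetric] )

lemma sig_deriv_bound: "\<bar>exp (-x) / (1 + exp (-x))^2\<bar> \<le> (1::real)"
proof -
  have e: "0 < exp (-x)" by simp
  have "exp (-x) \<le> (1 + exp (-x))^2" using e by (simp add: power2_eq_square algebra_simps)
  moreover have "0 < (1 + exp (-x))^2" using one_exp_pos[of x] by simp
  ultimately show ?thesis using e by (simp add: abs_of_pos divide_le_eq_1)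
qed

lemma hidden_abs: "\<bar>hidden d r w x l k i\<bar> \<le> 1"
  by (induction d r w x l k i rule: hidden.induct)
     (simp_all add: abs_of_pos sig_pos sig_le1)

lemma wupd_deriv: "((\<lambda>t. (w(p:=t)) q) has_real_derivative (if q = p then 1 else 0)) (at t0)"
  by (cases "q = p") auto

lemma delta_sum: fixes c :: "nat \<Rightarrow> real" shows "finite A \<Longrightarrow> (\<Sum>j\<in>A. (if (l,k,i,j) = (l0,k0,i0,j0) then c j else 0)) =
   (if l = l0 \<and> k = k0 \<and> i = i0 \<and> j0 \<in> A then c j0 else (0::real))"
  by (cases "l = l0 \<and> k = k0 \<and> i = i0") auto

lemma delta_sum_bound:
  fixes c :: "nat \<Rightarrow> real"
  assumes "finite A" "\<And>j. j \<in> A \<Longrightarrow> \<bar>c j\<bar> \<le> M" "0 \<le> M"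
  shows "\<bar>\<Sum>j\<in>A. (if (l,k,i,j) = (l0,k0,i0,j0) then 1 else 0) * c j\<bar> \<le> M"
proof -
  have "(\<Sum>j\<in>A. (if (l,k,i,j) = (l0,k0,i0,j0) then 1 else 0) * c j) =
     (\<Sum>j\<in>A. (if (l,k,i,j) = (l0,k0,i0,j0) then c j else 0))"
    by (rule sum.cong) auto
  also have "\<dots> = (if l = l0 \<and> k = k0 \<and> i = i0 \<and> j0 \<in> A then c j0 else (0::real))"
    using assms(1) by (rule delta_sum)
  finally show ?thesis using assms by auto
qed

lemma abs_mult_le1: fixes u v M :: real shows "\<bar>u\<bar> \<le> 1 \<Longrightarrow> \<bar>v\<bar> \<le> M \<Longrightarrow> \<bar>u * v\<bar> \<le> M"
proof -
  assume h: "\<bar>u\<bar> \<le> 1" "\<bar>v\<bar> \<le> M"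
  have "\<bar>u\<bar>*\<bar>v\<bar> \<le> 1*M" using h by (intro mult_mono) auto
  then show ?thesis by (simp add: abs_mult)
qed

lemma hidden_deriv:
  fixes w :: weights and B a :: real
  assumes a1: "a \<ge> 1" and B1: "B \<ge> 1" and xa: "\<forall>j\<in>{1..d}. \<bar>x j\<bar> \<le> a"
    and wB: "\<forall>l\<in>{1..L-1}. \<forall>k i j. \<bar>w (l,k,i,j)\<bar> \<le> B"
  shows "l \<le> L \<Longrightarrow> \<exists>D. ((\<lambda>t. hidden d r (w((l0,k0,i0,j0):=t)) x l k i) has_real_derivative D)
      (at (w (l0,k0,i0,j0))) \<and> \<bar>D\<bar> \<le> 2*a*((real r+1)*B)^(l-1) \<and> (k \<noteq> k0 \<longrightarrow> D = 0)"
proof (induction l arbitrary: k i rule: less_induct)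
  case (less l)
  define p where "p = (l0,k0,i0,j0)"
  define t0 where "t0 = w p"
  have wt0: "w(p := t0) = w" unfolding t0_def by simp
  have M0: "2 \<le> 2*a*((real r+1)*B)^e" for e
  proof -
    have "1 \<le> ((real r+1)*B)^e" proof (intro one_le_power)
      have "1*1 \<le> (real r + 1)*B" using B1 by (intro mult_mono) auto
      then show "1 \<le> (real r+1)*B" by simp
    qed
    moreover have "2*1 \<le> (2*a)*((real r+1)*B)^e"
      using calculation a1 by (intro mult_mono) auto
    ultimately show ?thesis by simp
  qed
  consider "l = 0" | "l = Suc 0" | m where "l = Suc (Suc m)" by (metis not0_implies_Suc)
  then show ?case
  proof cases
    case 1
    then show ?thesis using a1 by (intro exI[of _ 0]) simp
  next
    case 2
    define S where "S = (\<lambda>t. (\<Sum>j=1..d. (w(p:=t)) (0,k,i,j) * x j) + (w(p:=t)) (0,k,i,0))"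
    define S' where "S' = (\<Sum>j=1..d. (if (0,k,i,j) = p then 1 else 0) * x j) + (if (0,k,i,0) = p then 1 else 0)"
    have dS: "(S has_real_derivative S') (at t0)"
      unfolding S_def S'_def
      by (intro DERIV_add DERIV_sum DERIV_cmult_right wupd_deriv)
    have hS: "(\<lambda>t. hidden d r (w(p:=t)) x l k i) = (\<lambda>t. sigmoid (S t))"
      using 2 by (simp add: S_def)
    define D where "D = exp (- S t0) / (1 + exp (- S t0))^2 * S'"
    have dD: "((\<lambda>t. sigmoid (S t)) has_real_derivative D) (at t0)"
      unfolding D_def by (rule DERIV_chain2[OF sig_deriv dS])
    have b1: "\<bar>\<Sum>j=1..d. (if (0,k,i,j) = p then 1 else 0) * x j\<bar> \<le> a"
      unfolding p_def by (rule delta_sum_bound) (use xa a1 in auto)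
    have "\<bar>S'\<bar> \<le> a + 1" unfolding S'_def using b1 by (auto simp: abs_if split: if_splits)
    then have "\<bar>S'\<bar> \<le> 2*a" using a1 by simp
    then have "\<bar>D\<bar> \<le> 2*a" unfolding D_def by (rule abs_mult_le1[OF sig_deriv_bound])
    then have "\<bar>D\<bar> \<le> 2*a*((real r+1)*B)^(l-1)" using 2 by simp
    moreover have "k \<noteq> k0 \<Longrightarrow> D = 0" unfolding D_def S'_def p_def by simp
    moreover have "((\<lambda>t. hidden d r (w(p:=t)) x l k i) has_real_derivative D) (at t0)"
      unfolding hS by (rule dD)
    ultimately show ?thesis unfolding p_def t0_def by blast
  next
    case 3
    then have mL: "Suc m \<in> {1..L-1}" using less.prems by auto
    have "\<forall>j. \<exists>D. ((\<lambda>t. hidden d r (w(p:=t)) x (Suc m) k j) has_real_derivative D) (at t0)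
       \<and> \<bar>D\<bar> \<le> 2*a*((real r+1)*B)^(Suc m-1) \<and> (k \<noteq> k0 \<longrightarrow> D = 0)"
    proof
      fix j
      have "Suc m < l" "Suc m \<le> L" using 3 less.prems by auto
      from less.IH[OF this, of k j] show "\<exists>D. ((\<lambda>t. hidden d r (w(p:=t)) x (Suc m) k j) has_real_derivative D) (at t0)
       \<and> \<bar>D\<bar> \<le> 2*a*((real r+1)*B)^(Suc m-1) \<and> (k \<noteq> k0 \<longrightarrow> D = 0)"
        unfolding p_def t0_def .
    qed
    then obtain Df where Df: "\<And>j. ((\<lambda>t. hidden d r (w(p:=t)) x (Suc m) k j) has_real_derivative Df j) (at t0)"
      "\<And>j. \<bar>Df j\<bar> \<le> 2*a*((real r+1)*B)^m" "\<And>j. k \<noteq> k0 \<Longrightarrow> Df j = 0"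
      by (auto simp: choice_iff)
    define M where "M = 2*a*((real r+1)*B)^m"
    define S where "S = (\<lambda>t. (\<Sum>j=1..r. (w(p:=t)) (Suc m,k,i,j) * hidden d r (w(p:=t)) x (Suc m) k j) + (w(p:=t)) (Suc m,k,i,0))"
    define S' where "S' = (\<Sum>j=1..r. (if (Suc m,k,i,j) = p then 1 else 0) * hidden d r w x (Suc m) k j
        + Df j * w (Suc m,k,i,j)) + (if (Suc m,k,i,0) = p then 1 else 0)"
    have dS: "(S has_real_derivative S') (at t0)"
      unfolding S_def S'_def
      apply (intro DERIV_add DERIV_sum DERIV_cong[OF DERIV_mult[OF wupd_deriv Df(1)]] wupd_deriv)
      using wt0 by simp
    have hS: "(\<lambda>t. hidden d r (w(p:=t)) x l k i) = (\<lambda>t. sigmoid (S t))"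
      using 3 by (simp add: S_def)
    define D where "D = exp (- S t0) / (1 + exp (- S t0))^2 * S'"
    have dD: "((\<lambda>t. sigmoid (S t)) has_real_derivative D) (at t0)"
      unfolding D_def by (rule DERIV_chain2[OF sig_deriv dS])
    have b1: "\<bar>\<Sum>j=1..r. (if (Suc m,k,i,j) = p then 1 else 0) * hidden d r w x (Suc m) k j\<bar> \<le> 1"
      unfolding p_def by (rule delta_sum_bound) (auto simp: hidden_abs)
    have b2: "\<bar>\<Sum>j=1..r. Df j * w (Suc m,k,i,j)\<bar> \<le> r * (M * B)"
    proof -
      have "\<bar>\<Sum>j=1..r. Df j * w (Suc m,k,i,j)\<bar> \<le> (\<Sum>j=1..r. \<bar>Df j * w (Suc m,k,i,j)\<bar>)"
        by (rule sum_abs)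
      also have "\<dots> \<le> (\<Sum>j=1..r. M * B)"
        unfolding abs_mult M_def
        by (intro sum_mono mult_mono Df(2)) (use wB mL a1 B1 in auto)
      finally show ?thesis by simp
    qed
    have M1: "2 \<le> M" using M0[of m] by (simp add: M_def)
    have MB: "2*1 \<le> M * B" using M1 B1 by (intro mult_mono) auto
    have "\<bar>S'\<bar> \<le> 1 + r * (M * B) + 1" unfolding S'_def sum.distrib using b1 b2
      by (auto simp: abs_if split: if_splits)
    also have "\<dots> \<le> M * B * (r + 1)" using MB
      by (simp add: algebra_simps)
    also have "\<dots> = 2*a*((real r+1)*B)^(l-1)" using 3 by (simp add: M_def algebra_simps)
    finally have "\<bar>S'\<bar> \<le> 2*a*((real r+1)*B)^(l-1)" .
    then have "\<bar>D\<bar> \<le> 2*a*((real r+1)*B)^(l-1)" unfolding D_def by (rule abs_mult_le1[OF sig_deriv_bound])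
    moreover have "k \<noteq> k0 \<Longrightarrow> D = 0" unfolding D_def S'_def p_def using Df(3) by simp
    moreover have "((\<lambda>t. hidden d r (w(p:=t)) x l k i) has_real_derivative D) (at t0)"
      unfolding hS by (rule dD)
    ultimately show ?thesis unfolding p_def t0_def by blast
  qed
qed

lemma net_abs:
  assumes "\<forall>k. \<bar>w (L,1,1,k)\<bar> \<le> \<gamma>"
  shows "\<bar>net d L r K w x\<bar> \<le> K * \<gamma>"
proof -
  have "\<bar>net d L r K w x\<bar> \<le> (\<Sum>j=1..K. \<bar>w (L,1,1,j) * hidden d r w x L j 1\<bar>)"
    unfolding net_def by (rule sum_abs)
  also have "\<dots> \<le> (\<Sum>j=1..K. \<gamma> * 1)"
    unfolding abs_mult using assms by (intro sum_mono mult_mono) (auto simp: hidden_abs)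
  finally show ?thesis by simp
qed

lemma net_deriv:
  fixes w :: weights and B a :: real
  assumes a1: "a \<ge> 1" and B1: "B \<ge> 1" and xa: "\<forall>j\<in>{1..d}. \<bar>x j\<bar> \<le> a"
    and wB: "\<forall>l\<in>{1..L-1}. \<forall>k i j. \<bar>w (l,k,i,j)\<bar> \<le> B"
    and g1: "\<gamma> \<ge> 1" and wg: "\<forall>k. \<bar>w (L,1,1,k)\<bar> \<le> \<gamma>"
  shows "\<exists>D. ((\<lambda>t. net d L r K (w((l0,k0,i0,j0):=t)) x) has_real_derivative D)
      (at (w (l0,k0,i0,j0))) \<and> \<bar>D\<bar> \<le> 2*\<gamma>*(2*a*((real r+1)*B)^(L-1))"
proof -
  define p where "p = (l0,k0,i0,j0)"
  define t0 where "t0 = w p"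
  define M where "M = 2*a*((real r+1)*B)^(L-1)"
  have wt0: "w(p := t0) = w" unfolding t0_def by simp
  have M2: "2 \<le> M"
  proof -
    have "1 \<le> ((real r+1)*B)^(L-1)" proof (intro one_le_power)
      have "1*1 \<le> (real r + 1)*B" using B1 by (intro mult_mono) auto
      then show "1 \<le> (real r+1)*B" by simp
    qed
    moreover have "2*1 \<le> (2*a)*((real r+1)*B)^(L-1)"
      using calculation a1 by (intro mult_mono) auto
    ultimately show ?thesis by (simp add: M_def)
  qed
  have "\<forall>j. \<exists>D. ((\<lambda>t. hidden d r (w(p:=t)) x L j 1) has_real_derivative D) (at t0)
       \<and> \<bar>D\<bar> \<le> M \<and> (j \<noteq> k0 \<longrightarrow> D = 0)"
    unfolding p_def t0_def M_def using hidden_deriv[OF a1 B1 xa wB order_refl] by blast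
  then obtain Df where Df: "\<And>j. ((\<lambda>t. hidden d r (w(p:=t)) x L j 1) has_real_derivative Df j) (at t0)"
      "\<And>j. \<bar>Df j\<bar> \<le> M" "\<And>j. j \<noteq> k0 \<Longrightarrow> Df j = 0"
    by (auto simp: choice_iff)
  define D where "D = (\<Sum>j=1..K. (if (L,1,1,j) = p then 1 else 0) * hidden d r w x L j 1
        + Df j * w (L,1,1,j))"
  have dD: "((\<lambda>t. net d L r K (w(p:=t)) x) has_real_derivative D) (at t0)"
    unfolding net_def D_def
    apply (intro DERIV_sum DERIV_cong[OF DERIV_mult[OF wupd_deriv Df(1)]])
    using wt0 by simp
  have b1: "\<bar>\<Sum>j=1..K. (if (L,1,1,j) = p then 1 else 0) * hidden d r w x L j 1\<bar> \<le> 1"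
    unfolding p_def by (rule delta_sum_bound) (auto simp: hidden_abs)
  have "(\<Sum>j=1..K. Df j * w (L,1,1,j)) = (\<Sum>j=1..K. if k0 = j then Df k0 * w (L,1,1,k0) else 0)"
    by (rule sum.cong) (use Df(3) in auto)
  also have "\<dots> = (if k0 \<in> {1..K} then Df k0 * w (L,1,1,k0) else 0)"
    by simp
  finally have b2: "\<bar>\<Sum>j=1..K. Df j * w (L,1,1,j)\<bar> \<le> M * \<gamma>"
    using Df(2)[of k0] wg M2 g1 by (auto simp: abs_mult intro!: mult_mono)
  have "\<bar>D\<bar> \<le> 1 + M * \<gamma>" unfolding D_def sum.distrib using b1 b2 by linarith
  also have "\<dots> \<le> 2 * \<gamma> * M"
  proof -
    have "2*1 \<le> M * \<gamma>" using M2 g1 by (intro mult_mono) auto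
    then show ?thesis by (simp add: algebra_simps)
  qed
  finally show ?thesis using dD unfolding p_def t0_def M_def by blast
qed

lemma risk_deriv:
  fixes w :: weights and B a :: real
  assumes a1: "a \<ge> 1" and B1: "B \<ge> 1"
    and wB: "\<forall>l\<in>{1..L-1}. \<forall>k i j. \<bar>w (l,k,i,j)\<bar> \<le> B"
    and g1: "\<gamma> \<ge> 1" and wg: "\<forall>k. \<bar>w (L,1,1,k)\<bar> \<le> \<gamma>"
    and XY: "\<forall>i\<in>{1..n}. (\<forall>j\<in>{1..d}. \<bar>X i j\<bar> \<le> a) \<and> \<bar>Y i\<bar> \<le> \<beta>"
    and Kg: "real K * \<gamma> \<ge> \<beta>"
  shows "\<bar>deriv (\<lambda>t. emp_risk d L r K n X Y (w(p:=t))) (w p)\<bar>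
     \<le> 8*K*\<gamma>^2*(2*a*((real r+1)*B)^(L-1))"
proof -
  obtain l0 k0 i0 j0 where p: "p = (l0,k0,i0,j0)" by (cases p) auto
  define t0 where "t0 = w p"
  define M where "M = 2*a*((real r+1)*B)^(L-1)"
  have wt0: "w(p := t0) = w" unfolding t0_def by simp
  have "\<forall>i\<in>{1..n}. \<exists>D. ((\<lambda>t. net d L r K (w(p:=t)) (X i)) has_real_derivative D) (at t0)
       \<and> \<bar>D\<bar> \<le> 2*\<gamma>*M"
    unfolding p t0_def M_def using net_deriv[OF a1 B1 _ wB g1 wg] XY by blast
  then obtain Dn where Dn: "\<And>i. i \<in> {1..n} \<Longrightarrow> ((\<lambda>t. net d L r K (w(p:=t)) (X i)) has_real_derivative Dn i) (at t0)"
      "\<And>i. i \<in> {1..n} \<Longrightarrow> \<bar>Dn i\<bar> \<le> 2*\<gamma>*M"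
    by metis
  define D where "D = (1 / real n) * (\<Sum>i=1..n. 2 * (Y i - net d L r K w (X i)) * (- Dn i))"
  have dD: "((\<lambda>t. emp_risk d L r K n X Y (w(p:=t))) has_real_derivative D) (at t0)"
    unfolding emp_risk_def D_def
    apply (intro DERIV_cmult DERIV_sum)
    apply (rule DERIV_cong[OF DERIV_power[OF DERIV_diff[OF DERIV_const Dn(1)]]])
    using wt0 by auto
  have tb: "\<bar>2 * (Y i - net d L r K w (X i)) * (- Dn i)\<bar> \<le> 8*K*\<gamma>^2*M" if i: "i \<in> {1..n}" for i
  proof -
    have "\<bar>Y i - net d L r K w (X i)\<bar> \<le> 2*K*\<gamma>"
    proof -
      have "\<bar>Y i\<bar> \<le> \<beta>" using XY i by auto
      then show ?thesis
        using abs_triangle_ineq4[of "Y i" "net d L r K w (X i)"] net_abs[OF wg, of d r K "X i"] Kg by linarith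
    qed
    then have "\<bar>Y i - net d L r K w (X i)\<bar> * \<bar>Dn i\<bar> \<le> (2*K*\<gamma>) * (2*\<gamma>*M)"
      using Dn(2)[OF i] g1 by (intro mult_mono) auto
    moreover have "\<bar>2 * (Y i - net d L r K w (X i)) * (- Dn i)\<bar> = 2 * (\<bar>Y i - net d L r K w (X i)\<bar> * \<bar>Dn i\<bar>)"
      by (simp only: abs_mult abs_minus_cancel abs_numeral mult.assoc)
    ultimately have "\<bar>2 * (Y i - net d L r K w (X i)) * (- Dn i)\<bar> \<le> 2*((2*K*\<gamma>) * (2*\<gamma>*M))"
      by linarith
    also have "\<dots> = 8*K*\<gamma>^2*M" by (simp add: power2_eq_square)
    finally show ?thesis .
  qed
  have "\<bar>D\<bar> \<le> (1 / real n) * (\<Sum>i=1..n. \<bar>2 * (Y i - net d L r K w (X i)) * (- Dn i)\<bar>)"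
    unfolding D_def by (simp only: abs_mult[of "1 / real n"] abs_of_nonneg[of "1 / real n"] of_nat_0_le_iff zero_le_divide_1_iff)
       (intro mult_left_mono sum_abs, simp)
  also have "\<dots> \<le> (1 / real n) * (\<Sum>i=1..n. 8*K*\<gamma>^2*M)"
    by (intro mult_left_mono sum_mono tb) auto
  also have "\<dots> \<le> 8*K*\<gamma>^2*M"
  proof (cases "n = 0")
    case False
    then show ?thesis by simp
  next
    case True
    then show ?thesis using M_def a1 B1 by simp
  qed
  finally show ?thesis using DERIV_imp_deriv[OF dD] unfolding t0_def M_def by simp
qed

lemma card_wi: "card (weight_index d L r K) \<le> K * (r*(d+1) + L*r*(r+1) + 1)"
proof -
  define m where "m = L - 1"
  have e1: "{(l,k,i,j). l = 0 \<and> k \<in> {1..K} \<and> i \<in> {1..r} \<and> j \<in> {0..d}} = {0::nat} \<times> {1..K} \<times> {1..r} \<times> {0..d}" by auto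
  have e2: "{(l,k,i,j). l \<in> {1..L-1} \<and> k \<in> {1..K} \<and> i \<in> {1..r} \<and> j \<in> {0..r}} = {1..m} \<times> {1..K} \<times> {1..r} \<times> {0..r}" unfolding m_def by auto
  have e3: "{(l,k,i,j). l = L \<and> k = 1 \<and> i = 1 \<and> j \<in> {1..K}} = {L} \<times> {1::nat} \<times> {1::nat} \<times> {1..K}" by auto
  have "card (weight_index d L r K) \<le> K*r*(d+1) + m*K*r*(r+1) + K"
  proof -
    let ?A = "{0::nat} \<times> {1..K} \<times> {1..r} \<times> {0..d}"
    let ?B = "{1..m} \<times> {1..K} \<times> {1..r} \<times> {0..r}"
    let ?C = "{L} \<times> {1::nat} \<times> {1::nat} \<times> {1..K}"
    have "card (?A \<union> ?B \<union> ?C) \<le> card (?A \<union> ?B) + card ?C" by (rule card_Un_le)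
    also have "\<dots> \<le> card ?A + card ?B + card ?C" using card_Un_le[of ?A ?B] by linarith
    also have "\<dots> = K*r*(d+1) + m*K*r*(r+1) + K" by (simp add: card_cartesian_product algebra_simps)
    finally show ?thesis unfolding weight_index_def e1 e2 e3 .
  qed
  also have "\<dots> \<le> K * (r*(d+1) + L*r*(r+1) + 1)"
  proof -
    have "m*K*r*(r+1) \<le> K*(L*r*(r+1))" unfolding m_def by (simp add: algebra_simps)
    then show ?thesis by (simp add: algebra_simps)
  qed
  finally show ?thesis .
qed

theorem lemma3:
  fixes d L r :: nat and a :: real
  assumes "a \<ge> 1" and "L \<ge> 1"
  shows "\<exists>c14 > 0. \<forall>(K::nat) (n::nat) (\<beta>::real) (B::real) (\<gamma>::real)
            (X :: nat \<Rightarrow> nat \<Rightarrow> real) (Y :: nat \<Rightarrow> real) (w :: weights).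
     \<beta> \<ge> 1 \<longrightarrow> B \<ge> 1 \<longrightarrow> \<gamma> \<ge> 1 \<longrightarrow>
     (\<forall>i\<in>{1..n}. (\<forall>j\<in>{1..d}. \<bar>X i j\<bar> \<le> a) \<and> \<bar>Y i\<bar> \<le> \<beta>) \<longrightarrow>
     real K * \<gamma> \<ge> \<beta> \<longrightarrow>
     (\<forall>k. \<bar>w (L,1,1,k)\<bar> \<le> \<gamma>) \<longrightarrow>
     (\<forall>l\<in>{1..L-1}. \<forall>k i j. \<bar>w (l,k,i,j)\<bar> \<le> B) \<longrightarrow>
     grad_norm (emp_risk d L r K n X Y) (weight_index d L r K) w
       \<le> c14 * real K powr (3/2) * \<gamma>\<^sup>2 * B ^ L"
proof -
  define C2 where "C2 = real (r*(d+1) + L*r*(r+1) + 1)"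
  define C1 where "C1 = 16*a*(real r+1)^L"
  have C2pos: "C2 > 0" unfolding C2_def by (rule of_nat_0_less_iff[THEN iffD2]) simp
  have C1pos: "C1 > 0" unfolding C1_def using assms(1) by simp
  show ?thesis
  proof (intro exI[of _ "C1 * sqrt C2"] conjI allI impI)
    show "C1 * sqrt C2 > 0" using C1pos C2pos by simp
    fix K n :: nat and \<beta> B \<gamma> :: real and X :: "nat \<Rightarrow> nat \<Rightarrow> real" and Y :: "nat \<Rightarrow> real" and w :: weights
    assume b1: "\<beta> \<ge> 1" and B1: "B \<ge> 1" and g1: "\<gamma> \<ge> 1"
      and XY: "\<forall>i\<in>{1..n}. (\<forall>j\<in>{1..d}. \<bar>X i j\<bar> \<le> a) \<and> \<bar>Y i\<bar> \<le> \<beta>"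
      and Kg: "real K * \<gamma> \<ge> \<beta>" and wg: "\<forall>k. \<bar>w (L,1,1,k)\<bar> \<le> \<gamma>"
      and wB: "\<forall>l\<in>{1..L-1}. \<forall>k i j. \<bar>w (l,k,i,j)\<bar> \<le> B"
    have K1: "real K \<ge> 1"
    proof (rule ccontr)
      assume "\<not> real K \<ge> 1" then have "K = 0" by simp
      then show False using Kg b1 by simp
    qed
    define G where "G = C1 * K * \<gamma>^2 * B^L"
    have G0: "G \<ge> 0" unfolding G_def using C1pos K1 B1 by simp
    have pd: "\<bar>deriv (\<lambda>t. emp_risk d L r K n X Y (w(p:=t))) (w p)\<bar> \<le> G" for p
    proof -
      have "\<bar>deriv (\<lambda>t. emp_risk d L r K n X Y (w(p:=t))) (w p)\<bar>
          \<le> 8*K*\<gamma>^2*(2*a*((real r+1)*B)^(L-1))"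
        using risk_deriv[OF assms(1) B1 wB g1 wg XY Kg, where p=p] by simp
      also have "\<dots> = 16*a*(real r+1)^(L-1) * K*\<gamma>^2 * B^(L-1)"
        by (simp add: power_mult_distrib)
      also have "\<dots> \<le> 16*a*(real r+1)^L * K*\<gamma>^2 * B^L"
      proof -
        have "(real r+1)^(L-1) \<le> (real r+1)^L" by (rule power_increasing) auto
        moreover have "B^(L-1) \<le> B^L" using B1 by (intro power_increasing) auto
        ultimately have "(real r+1)^(L-1) * B^(L-1) \<le> (real r+1)^L * B^L"
          using B1 by (intro mult_mono) auto
        then have "(16*a*K*\<gamma>^2) * ((real r+1)^(L-1) * B^(L-1)) \<le> (16*a*K*\<gamma>^2) * ((real r+1)^L * B^L)"
          using assms(1) K1 by (intro mult_left_mono) auto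
        then show ?thesis by (simp add: algebra_simps)
      qed
      finally show ?thesis unfolding G_def C1_def by simp
    qed
    define I where "I = weight_index d L r K"
    have "(\<Sum>p\<in>I. (deriv (\<lambda>t. emp_risk d L r K n X Y (w(p := t))) (w p))\<^sup>2) \<le> of_nat (card I) * G^2"
    proof (rule sum_bounded_above)
      fix p
      have "\<bar>deriv (\<lambda>t. emp_risk d L r K n X Y (w(p := t))) (w p)\<bar>^2 \<le> G^2"
        using pd[of p] by (intro power_mono) auto
      then show "(deriv (\<lambda>t. emp_risk d L r K n X Y (w(p := t))) (w p))\<^sup>2 \<le> G^2" by simp
    qed
    also have "\<dots> \<le> (C2 * K) * G^2"
    proof -
      have "real (card I) \<le> real K * C2" unfolding I_def C2_def using card_wi[of d L r K]
        by (metis of_nat_le_iff of_nat_mult)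
      then show ?thesis by (intro mult_right_mono) (auto simp: algebra_simps)
    qed
    finally have "grad_norm (emp_risk d L r K n X Y) I w \<le> sqrt ((C2 * K) * G^2)"
      unfolding grad_norm_def by (rule real_sqrt_le_mono)
    also have "\<dots> = sqrt C2 * sqrt K * G" using G0 by (simp add: real_sqrt_mult)
    also have "\<dots> = C1 * sqrt C2 * (K * sqrt K) * \<gamma>\<^sup>2 * B ^ L" unfolding G_def by (simp add: algebra_simps)
    also have "K * sqrt K = real K powr (3/2)"
    proof -
      have "real K powr (3/2) = real K powr (1 + 1/2)" by simp
      also have "\<dots> = real K powr 1 * real K powr (1/2)" using K1 by (subst powr_add) auto
      also have "\<dots> = K * sqrt K" using K1 by (simp add: powr_half_sqrt)
      finally show ?thesis by simp
    qed
    finally show "grad_norm (emp_risk d L r K n X Y) (weight_index d L r K) w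
       \<le> C1 * sqrt C2 * real K powr (3/2) * \<gamma>\<^sup>2 * B ^ L" unfolding I_def .
  qed
qed

end
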